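(* Let $\alpha\in\ell^2$. The following are equivalent: (i) $R_\alpha$ is bounded on $\ell^2$; (ii) $L([0,\infty))<\infty$; (iii) there exists $\epsilon>0$ such that the associated $(\epsilon,L)$-sequence has length $0$.
   Context: $\mathbb{N}=\{0,1,2,\dots\}$; $(R_\alpha f)(k)=\alpha_k\sum_{j=0}^kf(j)$. For a finite natural interval $I$: $\mu(I)=\sum_{k\in I}|\alpha_k|^2$, $\|f\|_{2,I}=(\sum_{k\in I}|f(k)|^2)^{1/2}$, $l(I,f)=\sum_{k\in I}\sum_{n\in I\setminus\{k\}}|\alpha_k\alpha_n\sum_{j=\min(k,n)+1}^{\max(k,n)}f(j)|^2$, $L(I)=(\sup_{\|f\|_{2,I}\le1}l(I,f)/\mu(I))^{1/2}$ (sup over $f$ supported in $I$; $L(I)=0$ if $\alpha$ vanishes on $I$). For infinite intervals, $L([a,\infty))=\lim_{b\to\infty}L([a,b])=\sup_{b\ge a}L([a,b])$. $(\epsilon,L)$-sequence: $c_0=0$, $c_{k+1}=\inf\{t\in\mathbb{N}:t>c_k,\ L([c_k,t-1])>\epsilon\}$ ($\inf\emptyset=+\infty$); it has length $N$ if $c_N<\infty$ and $c_{N+1}=+\infty$. *)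

theory Defs
  imports "HOL-Analysis.Analysis" "HOL-Library.Extended_Nat"
begin

definition Rop :: "(nat \<Rightarrow> complex) \<Rightarrow> (nat \<Rightarrow> complex) \<Rightarrow> nat \<Rightarrow> complex" where
  "Rop \<alpha> f k = \<alpha> k * (\<Sum>j\<le>k. f j)"

definition in_l2 :: "(nat \<Rightarrow> complex) \<Rightarrow> bool" where
  "in_l2 f \<longleftrightarrow> summable (\<lambda>k. (cmod (f k))\<^sup>2)"

definition l2norm :: "(nat \<Rightarrow> complex) \<Rightarrow> real" where
  "l2norm f = sqrt (\<Sum>k. (cmod (f k))\<^sup>2)"

definition Rop_bounded :: "(nat \<Rightarrow> complex) \<Rightarrow> bool" where
  "Rop_bounded \<alpha> \<longleftrightarrow> (\<exists>C. \<forall>f. in_l2 f \<longrightarrow>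
      in_l2 (Rop \<alpha> f) \<and> l2norm (Rop \<alpha> f) \<le> C * l2norm f)"

definition mu :: "(nat \<Rightarrow> complex) \<Rightarrow> nat \<Rightarrow> nat \<Rightarrow> real" where
  "mu \<alpha> a b = (\<Sum>k\<in>{a..b}. (cmod (\<alpha> k))\<^sup>2)"

definition norm2I :: "nat \<Rightarrow> nat \<Rightarrow> (nat \<Rightarrow> complex) \<Rightarrow> real" where
  "norm2I a b f = sqrt (\<Sum>k\<in>{a..b}. (cmod (f k))\<^sup>2)"

definition lI :: "(nat \<Rightarrow> complex) \<Rightarrow> nat \<Rightarrow> nat \<Rightarrow> (nat \<Rightarrow> complex) \<Rightarrow> real" where
  "lI \<alpha> a b f = (\<Sum>k\<in>{a..b}. \<Sum>n\<in>{a..b} - {k}.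
      (cmod (\<alpha> k * \<alpha> n * (\<Sum>j\<in>{min k n + 1..max k n}. f j)))\<^sup>2)"

text \<open>L([a,b]); defined as 0 when alpha vanishes on [a,b]. The supremum is over
  f supported in [a,b] with ||f||_{2,[a,b]} <= 1 (a bounded, nonempty set of reals).\<close>
definition Lfin :: "(nat \<Rightarrow> complex) \<Rightarrow> nat \<Rightarrow> nat \<Rightarrow> real" where
  "Lfin \<alpha> a b = (if (\<forall>k\<in>{a..b}. \<alpha> k = 0) then 0
     else sqrt (Sup {lI \<alpha> a b f / mu \<alpha> a b | f.
                       (\<forall>k. k \<notin> {a..b} \<longrightarrow> f k = 0) \<and> norm2I a b f \<le> 1}))"

definition Linf :: "(nat \<Rightarrow> complex) \<Rightarrow> nat \<Rightarrow> ereal" where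
  "Linf \<alpha> a = (SUP b\<in>{a..}. ereal (Lfin \<alpha> a b))"

primrec epsL_seq :: "(nat \<Rightarrow> complex) \<Rightarrow> real \<Rightarrow> nat \<Rightarrow> enat" where
  "epsL_seq \<alpha> \<epsilon> 0 = 0"
| "epsL_seq \<alpha> \<epsilon> (Suc k) =
     (case epsL_seq \<alpha> \<epsilon> k of
        \<infinity> \<Rightarrow> \<infinity>
      | enat c \<Rightarrow> (if (\<exists>t. t > c \<and> Lfin \<alpha> c (t - 1) > \<epsilon>)
                   then enat (LEAST t. t > c \<and> Lfin \<alpha> c (t - 1) > \<epsilon>)
                   else \<infinity>))"

definition epsL_length :: "(nat \<Rightarrow> complex) \<Rightarrow> real \<Rightarrow> nat \<Rightarrow> bool" where
  "epsL_length \<alpha> \<epsilon> N \<longleftrightarrow> epsL_seq \<alpha> \<epsilon> N < \<infinity> \<and> epsL_seq \<alpha> \<epsilon> (Suc N) = \<infinity>"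

end

theory Submission imports Defs begin

definition Sp :: "(nat \<Rightarrow> complex) \<Rightarrow> nat \<Rightarrow> complex" where
  "Sp f k = (\<Sum>j\<le>k. f j)"

lemma seg_eq:
  assumes "m \<le> M"
  shows "(\<Sum>j\<in>{m+1..M}. f j) = Sp f M - Sp f m"
proof -
  have e: "{..M} = {..m} \<union> {m+1..M}" using assms by auto
  have "Sp f M = Sp f m + (\<Sum>j\<in>{m+1..M}. f j)"
    unfolding Sp_def e by (rule sum.union_disjoint) auto
  then show ?thesis by simp
qed

lemma cmod_seg: "cmod (\<Sum>j\<in>{Suc (min k n)..max k n}. f j) = cmod (Sp f k - Sp f n)"
proof (cases "k \<le> n")
  case True
  then show ?thesis using seg_eq[of k n f] by (simp add: norm_minus_commute)
next
  case False
  then show ?thesis using seg_eq[of n k f] by simp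
qed

lemma lI_eq: "lI \<alpha> a b f = (\<Sum>k\<in>{a..b}. \<Sum>n\<in>{a..b}-{k}.
   (cmod (\<alpha> k))\<^sup>2 * (cmod (\<alpha> n))\<^sup>2 * (cmod (Sp f k - Sp f n))\<^sup>2)"
  unfolding lI_def by (intro sum.cong refl) (simp add: norm_mult power_mult_distrib cmod_seg)

lemma lI_nonneg: "0 \<le> lI \<alpha> a b f"
  unfolding lI_def by (intro sum_nonneg) auto

lemma lI_scale: "lI \<alpha> a b (\<lambda>j. c * f j) = (cmod c)\<^sup>2 * lI \<alpha> a b f"
  unfolding lI_def by (simp add: sum_distrib_left[symmetric] norm_mult power_mult_distrib algebra_simps)

lemma mu_pos: assumes "\<not> (\<forall>k\<in>{a..b}. \<alpha> k = 0)" shows "0 < mu \<alpha> a b"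
proof -
  obtain k where k: "k \<in> {a..b}" "\<alpha> k \<noteq> 0" using assms by auto
  have "0 < (cmod (\<alpha> k))\<^sup>2" using k by simp
  also have "\<dots> \<le> mu \<alpha> a b" unfolding mu_def
    by (rule member_le_sum) (use k in auto)
  finally show ?thesis .
qed

lemma mu_nonneg: "0 \<le> mu \<alpha> a b" unfolding mu_def by (intro sum_nonneg) auto

lemma sq2: "((a::real) + b)\<^sup>2 \<le> 2 * a\<^sup>2 + 2 * b\<^sup>2"
proof -
  have "0 \<le> (a - b)\<^sup>2" by simp
  moreover have "(a + b)\<^sup>2 = a\<^sup>2 + 2*a*b + b\<^sup>2" by (simp add: power2_sum)
  moreover have "(a - b)\<^sup>2 = a\<^sup>2 - 2*a*b + b\<^sup>2" by (simp add: power2_diff)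
  ultimately show ?thesis by linarith
qed

lemma f_le1:
  assumes "\<forall>k. k \<notin> {a..b} \<longrightarrow> f k = 0" "norm2I a b f \<le> 1"
  shows "cmod (f j) \<le> 1"
proof (cases "j \<in> {a..b}")
  case True
  have "(\<Sum>k\<in>{a..b}. (cmod (f k))\<^sup>2) \<le> 1" using assms(2) unfolding norm2I_def
    by (simp add: real_sqrt_le_1_iff)
  moreover have "(cmod (f j))\<^sup>2 \<le> (\<Sum>k\<in>{a..b}. (cmod (f k))\<^sup>2)"
    by (rule member_le_sum) (use True in auto)
  ultimately have "(cmod (f j))\<^sup>2 \<le> 1" by linarith
  then show ?thesis by (simp add: power_le_one_iff abs_le_iff)
next
  case False
  then show ?thesis using assms(1) by auto
qed

lemma lI_bound:
  assumes "\<forall>k. k \<notin> {a..b} \<longrightarrow> f k = 0" "norm2I a b f \<le> 1"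
  shows "lI \<alpha> a b f \<le> (\<Sum>k\<in>{a..b}. \<Sum>n\<in>{a..b}-{k}. (cmod (\<alpha> k) * cmod (\<alpha> n) * (real b + 1))\<^sup>2)"
  unfolding lI_def
proof (intro sum_mono)
  fix k n assume k: "k \<in> {a..b}" and n: "n \<in> {a..b}-{k}"
  have "cmod (\<Sum>j\<in>{min k n + 1..max k n}. f j) \<le> (\<Sum>j\<in>{min k n + 1..max k n}. cmod (f j))"
    by (rule norm_sum)
  also have "\<dots> \<le> (\<Sum>j\<in>{min k n + 1..max k n}. 1)"
    by (intro sum_mono f_le1[OF assms])
  also have "\<dots> \<le> real b + 1" using k n by auto
  finally have X: "cmod (\<Sum>j\<in>{min k n + 1..max k n}. f j) \<le> real b + 1" .
  show "(cmod (\<alpha> k * \<alpha> n * (\<Sum>j\<in>{min k n + 1..max k n}. f j)))\<^sup>2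
        \<le> (cmod (\<alpha> k) * cmod (\<alpha> n) * (real b + 1))\<^sup>2"
    unfolding norm_mult
    by (intro power_mono mult_left_mono X) auto
qed

lemma bdd_set: "bdd_above {lI \<alpha> a b f / mu \<alpha> a b | f.
                       (\<forall>k. k \<notin> {a..b} \<longrightarrow> f k = 0) \<and> norm2I a b f \<le> 1}"
proof (rule bdd_aboveI)
  fix x assume "x \<in> {lI \<alpha> a b f / mu \<alpha> a b | f.
                       (\<forall>k. k \<notin> {a..b} \<longrightarrow> f k = 0) \<and> norm2I a b f \<le> 1}"
  then obtain f where f: "x = lI \<alpha> a b f / mu \<alpha> a b" "\<forall>k. k \<notin> {a..b} \<longrightarrow> f k = 0" "norm2I a b f \<le> 1"
    by blast
  show "x \<le> (\<Sum>k\<in>{a..b}. \<Sum>n\<in>{a..b}-{k}. (cmod (\<alpha> k) * cmod (\<alpha> n) * (real b + 1))\<^sup>2) / mu \<alpha> a b"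
    unfolding f(1) by (intro divide_right_mono lI_bound f(2,3) mu_nonneg)
qed

lemma zero_in_set: "0 \<in> {lI \<alpha> a b f / mu \<alpha> a b | f.
                       (\<forall>k. k \<notin> {a..b} \<longrightarrow> f k = 0) \<and> norm2I a b f \<le> 1}"
proof -
  have "lI \<alpha> a b (\<lambda>_. 0) = 0" unfolding lI_def by simp
  moreover have "norm2I a b (\<lambda>_. 0) = 0" unfolding norm2I_def by simp
  ultimately show ?thesis by (auto intro!: exI[of _ "\<lambda>_. 0"])
qed

lemma Sup_nonneg: "0 \<le> Sup {lI \<alpha> a b f / mu \<alpha> a b | f.
                       (\<forall>k. k \<notin> {a..b} \<longrightarrow> f k = 0) \<and> norm2I a b f \<le> 1}"
  by (intro cSup_upper zero_in_set bdd_set)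

lemma Lfin_nonneg: "0 \<le> Lfin \<alpha> a b" unfolding Lfin_def using Sup_nonneg by auto

lemma lI_le:
  assumes nz: "\<not> (\<forall>k\<in>{a..b}. \<alpha> k = 0)" and supp: "\<forall>k. k \<notin> {a..b} \<longrightarrow> f k = 0"
  shows "lI \<alpha> a b f \<le> (Lfin \<alpha> a b)\<^sup>2 * mu \<alpha> a b * (norm2I a b f)\<^sup>2"
proof -
  let ?S = "{lI \<alpha> a b f / mu \<alpha> a b | f.
                       (\<forall>k. k \<notin> {a..b} \<longrightarrow> f k = 0) \<and> norm2I a b f \<le> 1}"
  have "Lfin \<alpha> a b = sqrt (Sup ?S)" unfolding Lfin_def using nz by auto
  then have L2: "(Lfin \<alpha> a b)\<^sup>2 = Sup ?S" using Sup_nonneg[of \<alpha> a b] by simp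
  have mup: "0 < mu \<alpha> a b" using mu_pos[OF nz] .
  define s where "s = norm2I a b f"
  have T: "(\<Sum>k\<in>{a..b}. (cmod (f k))\<^sup>2) = s\<^sup>2" unfolding s_def norm2I_def
    by (simp add: sum_nonneg)
  show ?thesis
  proof (cases "s = 0")
    case True
    then have "(\<Sum>k\<in>{a..b}. (cmod (f k))\<^sup>2) = 0" using T by simp
    then have "\<forall>k\<in>{a..b}. (cmod (f k))\<^sup>2 = 0" by (subst (asm) sum_nonneg_eq_0_iff) auto
    then have "f = (\<lambda>_. 0)" using supp by (intro ext) (metis norm_eq_zero zero_eq_power2)
    then show ?thesis unfolding lI_def s_def[symmetric] by (simp add: True)
  next
    case False
    then have sp: "s > 0" unfolding s_def norm2I_def by (metis real_sqrt_ge_zero sum_nonneg zero_le_power2 order_neq_le_trans)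
    define h where "h = (\<lambda>j. complex_of_real (1/s) * f j)"
    have "(\<Sum>k\<in>{a..b}. (cmod (h k))\<^sup>2) = (1/s)\<^sup>2 * (\<Sum>k\<in>{a..b}. (cmod (f k))\<^sup>2)"
      unfolding h_def sum_distrib_left using sp by (intro sum.cong refl) (simp add: norm_mult norm_divide power_divide)
    also have "\<dots> = 1" using T sp by (simp add: field_simps)
    finally have nh: "norm2I a b h = 1" unfolding norm2I_def by simp
    have sh: "\<forall>k. k \<notin> {a..b} \<longrightarrow> h k = 0" using supp unfolding h_def by simp
    have "lI \<alpha> a b h / mu \<alpha> a b \<in> ?S" using nh sh by auto
    then have "lI \<alpha> a b h / mu \<alpha> a b \<le> Sup ?S" by (intro cSup_upper bdd_set)
    moreover have "lI \<alpha> a b h = (1/s)\<^sup>2 * lI \<alpha> a b f" unfolding h_def lI_scale using sp by (simp add: norm_divide)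
    ultimately have "(1/s)\<^sup>2 * lI \<alpha> a b f / mu \<alpha> a b \<le> (Lfin \<alpha> a b)\<^sup>2" using L2 by simp
    then have "lI \<alpha> a b f \<le> (Lfin \<alpha> a b)\<^sup>2 * mu \<alpha> a b * s\<^sup>2" using sp mup
      by (simp add: field_simps power2_eq_square)
    then show ?thesis unfolding s_def .
  qed
qed

lemma dbl:
  fixes w :: "nat \<Rightarrow> real" and S :: "nat \<Rightarrow> complex"
  assumes fin: "finite I" and w: "\<And>k. 0 \<le> w k"
  shows "(\<Sum>k\<in>I. \<Sum>n\<in>I-{k}. w k * w n * (cmod (S k - S n))\<^sup>2)
     \<le> 4 * (\<Sum>k\<in>I. w k) * (\<Sum>k\<in>I. w k * (cmod (S k))\<^sup>2)"
proof -
  have "(\<Sum>k\<in>I. \<Sum>n\<in>I-{k}. w k * w n * (cmod (S k - S n))\<^sup>2)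
     \<le> (\<Sum>k\<in>I. \<Sum>n\<in>I. w k * w n * (2 * (cmod (S k))\<^sup>2 + 2 * (cmod (S n))\<^sup>2))"
  proof (intro sum_mono)
    fix k assume "k \<in> I"
    have "(\<Sum>n\<in>I-{k}. w k * w n * (cmod (S k - S n))\<^sup>2)
       \<le> (\<Sum>n\<in>I-{k}. w k * w n * (2 * (cmod (S k))\<^sup>2 + 2 * (cmod (S n))\<^sup>2))"
    proof (intro sum_mono mult_left_mono)
      fix n
      have "cmod (S k - S n) \<le> cmod (S k) + cmod (S n)" by (rule norm_triangle_ineq4)
      then have "(cmod (S k - S n))\<^sup>2 \<le> (cmod (S k) + cmod (S n))\<^sup>2"
        by (intro power_mono) auto
      also have "\<dots> \<le> 2 * (cmod (S k))\<^sup>2 + 2 * (cmod (S n))\<^sup>2"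
        by (rule sq2)
      finally show "(cmod (S k - S n))\<^sup>2 \<le> 2 * (cmod (S k))\<^sup>2 + 2 * (cmod (S n))\<^sup>2" .
      show "0 \<le> w k * w n" using w by simp
    qed
    also have "\<dots> \<le> (\<Sum>n\<in>I. w k * w n * (2 * (cmod (S k))\<^sup>2 + 2 * (cmod (S n))\<^sup>2))"
      by (intro sum_mono2 fin) (auto intro!: mult_nonneg_nonneg w)
    finally show "(\<Sum>n\<in>I-{k}. w k * w n * (cmod (S k - S n))\<^sup>2)
       \<le> (\<Sum>n\<in>I. w k * w n * (2 * (cmod (S k))\<^sup>2 + 2 * (cmod (S n))\<^sup>2))" .
  qed
  also have "\<dots> = 4 * (\<Sum>k\<in>I. w k) * (\<Sum>k\<in>I. w k * (cmod (S k))\<^sup>2)"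
  proof -
    define a where "a = (\<lambda>k. (cmod (S k))\<^sup>2)"
    have e: "\<And>k n. w k * w n * (2 * a k + 2 * a n) = (2 * (w k * a k)) * w n + (2 * w k) * (w n * a n)"
      by (simp add: algebra_simps)
    have "(\<Sum>k\<in>I. \<Sum>n\<in>I. w k * w n * (2 * a k + 2 * a n))
       = (\<Sum>k\<in>I. (2 * (w k * a k)) * (\<Sum>n\<in>I. w n) + (2 * w k) * (\<Sum>n\<in>I. w n * a n))"
      unfolding e by (simp only: sum.distrib sum_distrib_left)
    also have "\<dots> = 2 * (\<Sum>k\<in>I. w k * a k) * (\<Sum>n\<in>I. w n) + 2 * (\<Sum>k\<in>I. w k) * (\<Sum>n\<in>I. w n * a n)"
      by (simp add: sum.distrib flip: sum_distrib_right sum_distrib_left)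
    finally show ?thesis unfolding a_def by (simp add: algebra_simps)
  qed
  finally show ?thesis .
qed

lemma dir1:
  assumes "Rop_bounded \<alpha>"
  shows "\<exists>B. \<forall>b. Lfin \<alpha> 0 b \<le> B"
proof -
  obtain C where C: "\<forall>f. in_l2 f \<longrightarrow> in_l2 (Rop \<alpha> f) \<and> l2norm (Rop \<alpha> f) \<le> C * l2norm f"
    using assms unfolding Rop_bounded_def by blast
  define D where "D = max C 0"
  have D0: "0 \<le> D" unfolding D_def by simp
  have "Lfin \<alpha> 0 b \<le> 2 * D" for b
  proof (cases "\<forall>k\<in>{0..b}. \<alpha> k = 0")
    case True
    then show ?thesis using D0 unfolding Lfin_def by simp
  next
    case False
    let ?S = "{lI \<alpha> 0 b f / mu \<alpha> 0 b | f.
                       (\<forall>k. k \<notin> {0..b} \<longrightarrow> f k = 0) \<and> norm2I 0 b f \<le> 1}"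
    have mup: "0 < mu \<alpha> 0 b" using mu_pos[OF False] .
    have "Sup ?S \<le> 4 * D\<^sup>2"
    proof (rule cSup_least)
      show "?S \<noteq> {}" using zero_in_set by blast
      fix x assume "x \<in> ?S"
      then obtain f where f: "x = lI \<alpha> 0 b f / mu \<alpha> 0 b" "\<forall>k. k \<notin> {0..b} \<longrightarrow> f k = 0"
        "norm2I 0 b f \<le> 1" by blast
      have sf: "(\<lambda>k. (cmod (f k))\<^sup>2) sums (\<Sum>k\<in>{0..b}. (cmod (f k))\<^sup>2)"
        by (rule sums_finite) (use f(2) in auto)
      have l2f: "in_l2 f" using sf unfolding in_l2_def by (rule sums_summable)
      have nf: "l2norm f = norm2I 0 b f" unfolding l2norm_def norm2I_def using sf by (simp add: sums_iff)
      have nf0: "0 \<le> l2norm f" unfolding nf norm2I_def by (simp add: sum_nonneg)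
      have R: "in_l2 (Rop \<alpha> f)" "l2norm (Rop \<alpha> f) \<le> C * l2norm f" using C l2f by auto
      have "C * l2norm f \<le> D * l2norm f" unfolding D_def by (intro mult_right_mono nf0) simp
      then have "l2norm (Rop \<alpha> f) \<le> D * l2norm f" using R(2) by linarith
      also have "\<dots> \<le> D" using f(3) D0 nf by (simp add: mult_left_le)
      finally have RD: "l2norm (Rop \<alpha> f) \<le> D" .
      have s0: "0 \<le> (\<Sum>k. (cmod (Rop \<alpha> f k))\<^sup>2)" using R(1) unfolding in_l2_def
        by (intro suminf_nonneg) auto
      have "(\<Sum>k\<in>{0..b}. (cmod (Rop \<alpha> f k))\<^sup>2) \<le> (\<Sum>k. (cmod (Rop \<alpha> f k))\<^sup>2)"
        using R(1) unfolding in_l2_def by (intro sum_le_suminf) auto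
      also have "\<dots> = (l2norm (Rop \<alpha> f))\<^sup>2" unfolding l2norm_def using s0 by simp
      also have "\<dots> \<le> D\<^sup>2" using RD by (intro power_mono) (auto simp: l2norm_def s0)
      finally have P: "(\<Sum>k\<in>{0..b}. (cmod (Rop \<alpha> f k))\<^sup>2) \<le> D\<^sup>2" .
      have "lI \<alpha> 0 b f \<le> 4 * mu \<alpha> 0 b * (\<Sum>k\<in>{0..b}. (cmod (Rop \<alpha> f k))\<^sup>2)"
        unfolding lI_eq mu_def
        using dbl[of "{0..b}" "\<lambda>k. (cmod (\<alpha> k))\<^sup>2" "Sp f"]
        by (simp add: Rop_def Sp_def norm_mult power_mult_distrib)
      then have "x \<le> 4 * (\<Sum>k\<in>{0..b}. (cmod (Rop \<alpha> f k))\<^sup>2)" using f(1) mup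
        by (simp add: pos_divide_le_eq algebra_simps)
      then show "x \<le> 4 * D\<^sup>2" using P by linarith
    qed
    moreover have "Lfin \<alpha> 0 b = sqrt (Sup ?S)" unfolding Lfin_def using False by auto
    ultimately have "Lfin \<alpha> 0 b \<le> sqrt (4 * D\<^sup>2)" by simp
    also have "\<dots> = 2 * D" using D0 by (simp add: real_sqrt_mult)
    finally show ?thesis .
  qed
  then show ?thesis by blast
qed

lemma sq_tri: "(cmod (x::complex))\<^sup>2 \<le> 2 * (cmod (x - y))\<^sup>2 + 2 * (cmod y)\<^sup>2"
proof -
  have "cmod x \<le> cmod (x - y) + cmod y" using norm_triangle_ineq2[of x y] by linarith
  then have "(cmod x)\<^sup>2 \<le> (cmod (x - y) + cmod y)\<^sup>2" by (intro power_mono) auto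
  also have "\<dots> \<le> 2 * (cmod (x - y))\<^sup>2 + 2 * (cmod y)\<^sup>2" by (rule sq2)
  finally show ?thesis .
qed

lemma dir2:
  assumes l2: "in_l2 \<alpha>" and B: "\<forall>b. Lfin \<alpha> 0 b \<le> B"
  shows "Rop_bounded \<alpha>"
proof (cases "\<forall>k. \<alpha> k = 0")
  case True
  then have "Rop \<alpha> f = (\<lambda>_. 0)" for f by (simp add: Rop_def fun_eq_iff)
  then show ?thesis unfolding Rop_bounded_def in_l2_def l2norm_def by (auto intro!: exI[of _ 0])
next
  case False
  then obtain m where m: "\<alpha> m \<noteq> 0" by blast
  define w where "w = (\<lambda>k. (cmod (\<alpha> k))\<^sup>2)"
  define wm where "wm = w m"
  have wm: "0 < wm" using m by (simp add: wm_def w_def)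
  define A where "A = (\<Sum>k. (cmod (\<alpha> k))\<^sup>2)"
  have muA: "mu \<alpha> 0 b \<le> A" for b unfolding mu_def A_def using l2 unfolding in_l2_def
    by (intro sum_le_suminf) auto
  have B0: "0 \<le> B" using B Lfin_nonneg[of \<alpha> 0 0] by (metis order_trans)
  have A0: "0 \<le> A" using muA[of 0] mu_nonneg[of \<alpha> 0 0] by linarith
  define K where "K = 2 * B\<^sup>2 * A / wm + 2 * A * (real m + 1)\<^sup>2"
  have K0: "0 \<le> K" unfolding K_def using A0 wm by simp
  have main: "(\<Sum>k<N. (cmod (Rop \<alpha> f k))\<^sup>2) \<le> K * (\<Sum>k. (cmod (f k))\<^sup>2)" if f: "in_l2 f" for f N
  proof -
    define F where "F = (\<Sum>k. (cmod (f k))\<^sup>2)"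
    have sumf: "summable (\<lambda>k. (cmod (f k))\<^sup>2)" using f unfolding in_l2_def .
    have F0: "0 \<le> F" unfolding F_def by (intro suminf_nonneg sumf) auto
    define b where "b = max N m"
    define g where "g = (\<lambda>j. if j \<le> b then f j else 0)"
    have Sg: "Sp g k = Sp f k" if "k \<le> b" for k unfolding Sp_def g_def using that by (intro sum.cong) auto
    have mI: "m \<in> {0..b}" unfolding b_def by auto
    have nz: "\<not> (\<forall>k\<in>{0..b}. \<alpha> k = 0)" using m mI by blast
    have suppg: "\<forall>k. k \<notin> {0..b} \<longrightarrow> g k = 0" unfolding g_def by auto
    have "(norm2I 0 b g)\<^sup>2 = (\<Sum>k\<in>{0..b}. (cmod (f k))\<^sup>2)" unfolding norm2I_def g_def
      by (simp add: sum_nonneg)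
    also have "\<dots> \<le> F" unfolding F_def using sumf by (intro sum_le_suminf) auto
    finally have ng: "(norm2I 0 b g)\<^sup>2 \<le> F" .
    have LB: "(Lfin \<alpha> 0 b)\<^sup>2 \<le> B\<^sup>2" using B Lfin_nonneg[of \<alpha> 0 b] by (intro power_mono) auto
    have "lI \<alpha> 0 b g \<le> (Lfin \<alpha> 0 b)\<^sup>2 * mu \<alpha> 0 b * (norm2I 0 b g)\<^sup>2" by (rule lI_le[OF nz suppg])
    also have "\<dots> \<le> B\<^sup>2 * A * F" using A0
      by (intro mult_mono LB muA ng mu_nonneg mult_nonneg_nonneg) auto
    finally have lIg: "lI \<alpha> 0 b g \<le> B\<^sup>2 * A * F" .
    have lIf: "lI \<alpha> 0 b g = (\<Sum>k\<in>{0..b}. \<Sum>n\<in>{0..b}-{k}. w k * w n * (cmod (Sp f k - Sp f n))\<^sup>2)"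
      unfolding lI_eq w_def by (intro sum.cong refl) (auto simp: Sg)
    have "wm * (\<Sum>k\<in>{0..b}. w k * (cmod (Sp f k - Sp f m))\<^sup>2)
        = wm * (\<Sum>k\<in>{0..b}-{m}. w k * (cmod (Sp f k - Sp f m))\<^sup>2)"
      by (subst sum.remove[OF _ mI]) auto
    also have "\<dots> = (\<Sum>n\<in>{0..b}-{m}. w m * w n * (cmod (Sp f m - Sp f n))\<^sup>2)"
      unfolding wm_def sum_distrib_left by (intro sum.cong refl) (simp add: norm_minus_commute mult.assoc)
    also have "\<dots> \<le> (\<Sum>k\<in>{0..b}. \<Sum>n\<in>{0..b}-{k}. w k * w n * (cmod (Sp f k - Sp f n))\<^sup>2)"
      by (rule member_le_sum[OF mI, where f = "\<lambda>k. \<Sum>n\<in>{0..b}-{k}. w k * w n * (cmod (Sp f k - Sp f n))\<^sup>2"])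
         (auto intro!: sum_nonneg simp: w_def)
    finally have st1: "wm * (\<Sum>k\<in>{0..b}. w k * (cmod (Sp f k - Sp f m))\<^sup>2) \<le> B\<^sup>2 * A * F"
      using lIf lIg by linarith
    have fj: "cmod (f j) \<le> sqrt F" for j
    proof -
      have "(cmod (f j))\<^sup>2 = (\<Sum>k\<in>{j}. (cmod (f k))\<^sup>2)" by simp
      also have "\<dots> \<le> F" unfolding F_def using sumf by (intro sum_le_suminf) auto
      finally show ?thesis by (intro real_le_rsqrt)
    qed
    have "cmod (Sp f m) \<le> (\<Sum>j\<le>m. cmod (f j))" unfolding Sp_def by (rule norm_sum)
    also have "\<dots> \<le> (\<Sum>j\<le>m. sqrt F)" by (intro sum_mono fj)
    also have "\<dots> = (real m + 1) * sqrt F" by simp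
    finally have "(cmod (Sp f m))\<^sup>2 \<le> ((real m + 1) * sqrt F)\<^sup>2" by (intro power_mono) auto
    also have "\<dots> = (real m + 1)\<^sup>2 * F" using F0 by (simp add: power_mult_distrib)
    finally have Sm: "(cmod (Sp f m))\<^sup>2 \<le> (real m + 1)\<^sup>2 * F" .
    have "(\<Sum>k<N. (cmod (Rop \<alpha> f k))\<^sup>2) \<le> (\<Sum>k\<in>{0..b}. (cmod (Rop \<alpha> f k))\<^sup>2)"
      by (intro sum_mono2) (auto simp: b_def)
    also have "\<dots> = (\<Sum>k\<in>{0..b}. w k * (cmod (Sp f k))\<^sup>2)"
      unfolding Rop_def Sp_def w_def by (simp add: norm_mult power_mult_distrib)
    also have "\<dots> \<le> (\<Sum>k\<in>{0..b}. w k * (2 * (cmod (Sp f k - Sp f m))\<^sup>2 + 2 * (cmod (Sp f m))\<^sup>2))"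
      by (intro sum_mono mult_left_mono sq_tri) (simp add: w_def)
    also have "\<dots> = 2 * (\<Sum>k\<in>{0..b}. w k * (cmod (Sp f k - Sp f m))\<^sup>2) + 2 * mu \<alpha> 0 b * (cmod (Sp f m))\<^sup>2"
      unfolding mu_def w_def distrib_left sum.distrib sum_distrib_left[symmetric] sum_distrib_right[symmetric]
      by (simp add: algebra_simps flip: sum_distrib_left)
    also have "\<dots> \<le> 2 * (B\<^sup>2 * A * F / wm) + 2 * (A * ((real m + 1)\<^sup>2 * F))"
    proof -
      have "(\<Sum>k\<in>{0..b}. w k * (cmod (Sp f k - Sp f m))\<^sup>2) \<le> B\<^sup>2 * A * F / wm"
        using st1 wm by (simp add: pos_le_divide_eq mult.commute)
      moreover have "mu \<alpha> 0 b * (cmod (Sp f m))\<^sup>2 \<le> A * ((real m + 1)\<^sup>2 * F)"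
        using A0 by (intro mult_mono muA Sm) auto
      ultimately show ?thesis by linarith
    qed
    also have "\<dots> = K * F" unfolding K_def by (simp add: algebra_simps)
    finally show ?thesis unfolding F_def .
  qed
  show ?thesis unfolding Rop_bounded_def
  proof (intro exI[of _ "sqrt K"] allI impI conjI)
    fix f assume f: "in_l2 f"
    define F where "F = (\<Sum>k. (cmod (f k))\<^sup>2)"
    have F0: "0 \<le> F" unfolding F_def using f unfolding in_l2_def by (intro suminf_nonneg) auto
    have s: "summable (\<lambda>k. (cmod (Rop \<alpha> f k))\<^sup>2)"
    proof (rule bounded_imp_summable[where B = "K * F"])
      fix n
      show "(\<Sum>k\<le>n. (cmod (Rop \<alpha> f k))\<^sup>2) \<le> K * F"
        using main[OF f, of "Suc n"] unfolding F_def lessThan_Suc_atMost .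
    qed simp
    then show "in_l2 (Rop \<alpha> f)" unfolding in_l2_def .
    have "(\<Sum>k. (cmod (Rop \<alpha> f k))\<^sup>2) \<le> K * F"
      by (rule suminf_le_const[OF s]) (use main[OF f] in \<open>simp add: F_def\<close>)
    then have "l2norm (Rop \<alpha> f) \<le> sqrt (K * F)" unfolding l2norm_def by simp
    also have "\<dots> = sqrt K * l2norm f" unfolding l2norm_def F_def by (simp add: real_sqrt_mult)
    finally show "l2norm (Rop \<alpha> f) \<le> sqrt K * l2norm f" .
  qed
qed

lemma Linf_iff: "Linf \<alpha> 0 < \<infinity> \<longleftrightarrow> (\<exists>B. \<forall>b. Lfin \<alpha> 0 b \<le> B)"
proof
  assume a: "Linf \<alpha> 0 < \<infinity>"
  have up: "ereal (Lfin \<alpha> 0 b) \<le> Linf \<alpha> 0" for b unfolding Linf_def by (rule SUP_upper) auto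
  then have "Linf \<alpha> 0 \<noteq> -\<infinity>" using up[of 0] by auto
  with a obtain r where r: "Linf \<alpha> 0 = ereal r" by (cases "Linf \<alpha> 0") auto
  show "\<exists>B. \<forall>b. Lfin \<alpha> 0 b \<le> B" using up r by auto
next
  assume "\<exists>B. \<forall>b. Lfin \<alpha> 0 b \<le> B"
  then obtain B where B: "\<forall>b. Lfin \<alpha> 0 b \<le> B" by blast
  have "Linf \<alpha> 0 \<le> ereal B" unfolding Linf_def by (rule SUP_least) (use B in auto)
  then show "Linf \<alpha> 0 < \<infinity>" by (rule order.strict_trans1) simp
qed

lemma eps0: "epsL_length \<alpha> \<epsilon> 0 \<longleftrightarrow> (\<forall>b. Lfin \<alpha> 0 b \<le> \<epsilon>)"
proof -
  have "epsL_length \<alpha> \<epsilon> 0 \<longleftrightarrow> \<not> (\<exists>t. t > 0 \<and> Lfin \<alpha> 0 (t - 1) > \<epsilon>)"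
    unfolding epsL_length_def by (simp add: zero_enat_def)
  also have "\<dots> \<longleftrightarrow> (\<forall>b. Lfin \<alpha> 0 b \<le> \<epsilon>)"
  proof
    assume "\<not> (\<exists>t. t > 0 \<and> Lfin \<alpha> 0 (t - 1) > \<epsilon>)"
    then show "\<forall>b. Lfin \<alpha> 0 b \<le> \<epsilon>" by (metis diff_Suc_1 not_le zero_less_Suc)
  next
    assume H: "\<forall>b. Lfin \<alpha> 0 b \<le> \<epsilon>"
    show "\<not> (\<exists>t. t > 0 \<and> Lfin \<alpha> 0 (t - 1) > \<epsilon>)" using H by (metis not_less)
  qed
  finally show ?thesis .
qed

theorem theorem4p4:
  fixes \<alpha> :: "nat \<Rightarrow> complex"
  assumes "in_l2 \<alpha>"
  shows "(Rop_bounded \<alpha> \<longleftrightarrow> Linf \<alpha> 0 < \<infinity>)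
       \<and> (Linf \<alpha> 0 < \<infinity> \<longleftrightarrow> (\<exists>\<epsilon>>0. epsL_length \<alpha> \<epsilon> 0))"
proof
  show "Rop_bounded \<alpha> \<longleftrightarrow> Linf \<alpha> 0 < \<infinity>"
    unfolding Linf_iff using dir1 dir2[OF assms] by blast
  show "Linf \<alpha> 0 < \<infinity> \<longleftrightarrow> (\<exists>\<epsilon>>0. epsL_length \<alpha> \<epsilon> 0)"
    unfolding Linf_iff eps0
  proof
    assume "\<exists>B. \<forall>b. Lfin \<alpha> 0 b \<le> B"
    then obtain B where B: "\<forall>b. Lfin \<alpha> 0 b \<le> B" by blast
    show "\<exists>\<epsilon>>0. \<forall>b. Lfin \<alpha> 0 b \<le> \<epsilon>"
      by (rule exI[of _ "max B 1"]) (use B in \<open>auto intro: le_max_iff_disj[THEN iffD2]\<close>)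
  qed blast
qed

end
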